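(* Let $d$ be a positive integer, let $F$ be a nonempty Young diagram whose outer boundary is encoded by the type sequence $w$, and let $T$ be a $d$-semistandard $w$-oscillating tableau. Let $\Phi_F(T)$ denote the filling of the unique $d$-RSK growth diagram on $F$ whose partitions along the outer boundary (listed from the point on the positive $x$-axis) are $T$. Then: (1) For each $i$, the sum of the entries in the $i$-th row of $\Phi_F(T)$ equals $\mathrm{wt}^+(T)_i$, and for each $j$, the sum of the entries in the $j$-th column equals $\mathrm{wt}^-(T)_j$. (2) Let $T^{\mathrm{rev}}$ be the reversed sequence, regarded as a $d$-semistandard $w'$-oscillating tableau, where $w'$ is obtained from $w$ by reversing it and interchanging `$+$' and `$-$'; let $F'$ be the reflection of $F$ across $y=x$ (whose outer boundary is encoded by $w'$). Then $\Phi_{F'}(T^{\mathrm{rev}})$ is the reflection of $\Phi_F(T)$ across the line $y=x$. The same properties hold with RSK growth diagrams in place of $d$-RSK growth diagrams and semistandard $w$-oscillating tableaux in place of $d$-semistandard ones.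
   Context: Partitions: finite weakly decreasing sequences of positive integers, $\lambda_i=0$ for $i>\ell(\lambda)$, $|\lambda|=\sum\lambda_i$; $d$-partitions have $\ell\le d$; $\alpha\prec\beta$ (also $\beta\succ\alpha$) means $\beta_1\ge\alpha_1\ge\beta_2\ge\alpha_2\ge\cdots$. Young diagrams lie in the first quadrant with unit cells at integer lattice points, left-justified; row $i$ is the $i$-th row of cells counted upward from the $x$-axis, column $j$ the $j$-th column counted from the $y$-axis. A filling assigns nonnegative integers to cells. The outer boundary is the lattice path of unit up/left steps from the positive $x$-axis to the positive $y$-axis; its type sequence records `$+$' for up steps and `$-$' for left steps. A semistandard $w$-oscillating tableau ($w=w_1\cdots w_r$) is a sequence of partitions $\emptyset=\lambda^{(0)},\ldots,\lambda^{(r)}=\emptyset$ with $\lambda^{(i-1)}\prec\lambda^{(i)}$ if $w_i=+$ and $\lambda^{(i-1)}\succ\lambda^{(i)}$ if $w_i=-$; $d$-semistandard if all are $d$-partitions. Weights: $\mathrm{wt}^+(T)_i=|\lambda^{(a_i)}|-|\lambda^{(a_i-1)}|$ where $a_i$ is the index of the $i$-th `$+$' in $w$; $\mathrm{wt}^-(T)_i=|\lambda^{(b_i-1)}|-|\lambda^{(b_i)}|$ where $b_i$ is the index of the $i$-th-to-last `$-$' in $w$. A growth diagram on $F$: a filling plus a partition at each lattice point, with $\emptyset$ on the coordinate axes, each cell (entry $m$; bottom-left, top-left, bottom-right, top-right corners $\kappa,\mu,\nu,\rho$) satisfying a local rule. RSK rule: $\mu\succ\kappa\prec\nu$, $\mu\prec\rho\succ\nu$,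 $\rho_1=m+\max(\mu_1,\nu_1)$, $\rho_i+\kappa_{i-1}=\min(\mu_{i-1},\nu_{i-1})+\max(\mu_i,\nu_i)$ for $i\ge2$. $d$-RSK rule: all four are $d$-partitions, $\mu\succ\kappa\prec\nu$, $\mu\prec\rho\succ\nu$, $m=0$ or $\kappa_d=0$, $\rho_1+\kappa_d=m+\min(\mu_d,\nu_d)+\max(\mu_1,\nu_1)$, $\rho_i+\kappa_{i-1}=\min(\mu_{i-1},\nu_{i-1})+\max(\mu_i,\nu_i)$ for $2\le i\le d$. It is known (and proved in the paper) that each $d$-semistandard (resp. semistandard) $w$-oscillating tableau placed on the outer boundary extends uniquely to a $d$-RSK (resp. RSK) growth diagram on $F$, so $\Phi_F$ is well defined. *)

theory Defs
  imports Main
begin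

text \<open>A partition is represented as a function lam :: nat => nat, where
  lam (i - 1) is the i-th part lambda_i (i >= 1); it must be weakly decreasing
  and eventually zero.\<close>

type_synonym partition = "nat \<Rightarrow> nat"

definition part :: "partition \<Rightarrow> nat \<Rightarrow> nat" where
  "part lam i = lam (i - 1)"

definition is_partition :: "partition \<Rightarrow> bool" where
  "is_partition lam \<longleftrightarrow> (\<forall>i. lam (Suc i) \<le> lam i) \<and> (\<exists>n. \<forall>i\<ge>n. lam i = 0)"

definition is_dpartition :: "nat \<Rightarrow> partition \<Rightarrow> bool" where
  "is_dpartition d lam \<longleftrightarrow> is_partition lam \<and> (\<forall>i>d. part lam i = 0)"

definition pempty :: partition where
  "pempty = (\<lambda>_. 0)"

definition psize :: "partition \<Rightarrow> nat" where
  "psize lam = (\<Sum>i\<in>{i. lam i \<noteq> 0}. lam i)"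

definition prec :: "partition \<Rightarrow> partition \<Rightarrow> bool" where
  "prec al be \<longleftrightarrow> (\<forall>i\<ge>1. part be (i + 1) \<le> part al i \<and> part al i \<le> part be i)"

text \<open>Type sequences are bool lists: True = '+', False = '-'.
  A tableau is a list of partitions lambda^(0), ..., lambda^(r).\<close>

definition osc_tableau :: "(partition \<Rightarrow> bool) \<Rightarrow> bool list \<Rightarrow> partition list \<Rightarrow> bool" where
  "osc_tableau good w T \<longleftrightarrow>
     length T = length w + 1 \<and> T ! 0 = pempty \<and> T ! length w = pempty \<and>
     (\<forall>k\<le>length w. good (T ! k)) \<and>
     (\<forall>k\<in>{1..length w}. if w ! (k - 1) then prec (T ! (k - 1)) (T ! k)
                                         else prec (T ! k) (T ! (k - 1)))"

definition semistandard_osc :: "bool list \<Rightarrow> partition list \<Rightarrow> bool" where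
  "semistandard_osc w T \<longleftrightarrow> osc_tableau is_partition w T"

definition d_semistandard_osc :: "nat \<Rightarrow> bool list \<Rightarrow> partition list \<Rightarrow> bool" where
  "d_semistandard_osc d w T \<longleftrightarrow> osc_tableau (is_dpartition d) w T"

definition plus_index :: "bool list \<Rightarrow> nat \<Rightarrow> nat" where
  "plus_index w i = (THE a. a \<in> {1..length w} \<and> w ! (a - 1) \<and> count_list (take a w) True = i)"

text \<open>b_j: the (1-based) index in w of the j-th-to-last '-'.\<close>
definition minus_index :: "bool list \<Rightarrow> nat \<Rightarrow> nat" where
  "minus_index w j = (THE b. b \<in> {1..length w} \<and> \<not> w ! (b - 1) \<and> count_list (drop (b - 1) w) False = j)"

definition wt_plus :: "bool list \<Rightarrow> partition list \<Rightarrow> nat \<Rightarrow> int" where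
  "wt_plus w T i = int (psize (T ! plus_index w i)) - int (psize (T ! (plus_index w i - 1)))"

definition wt_minus :: "bool list \<Rightarrow> partition list \<Rightarrow> nat \<Rightarrow> int" where
  "wt_minus w T j = int (psize (T ! (minus_index w j - 1))) - int (psize (T ! minus_index w j))"

text \<open>A cell is (i, j) = (row, column), i, j >= 1; rows counted upward from the
  x-axis, columns from the y-axis. Cell (i,j) is the unit square
  [j-1,j] x [i-1,i]. Lattice points are (x, y).\<close>

definition young_diagram :: "(nat \<times> nat) set \<Rightarrow> bool" where
  "young_diagram F \<longleftrightarrow> finite F \<and> (\<forall>(i, j)\<in>F. 1 \<le> i \<and> 1 \<le> j) \<and>
     (\<forall>(i, j)\<in>F. \<forall>i' j'. 1 \<le> i' \<and> i' \<le> i \<and> 1 \<le> j' \<and> j' \<le> j \<longrightarrow> (i', j') \<in> F)"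

definition row_len :: "(nat \<times> nat) set \<Rightarrow> nat \<Rightarrow> nat" where
  "row_len F i = card {j. (i, j) \<in> F}"

definition num_rows :: "(nat \<times> nat) set \<Rightarrow> nat" where
  "num_rows F = card {i. (i, 1) \<in> F}"

definition num_cols :: "(nat \<times> nat) set \<Rightarrow> nat" where
  "num_cols F = card {j. (1, j) \<in> F}"

text \<open>Type sequence of the outer boundary, traversed from the positive x-axis
  (point (row_len F 1, 0)) to the positive y-axis: for each row i, an up step
  along its right end, followed by (row_len i - row_len (i+1)) left steps.\<close>
definition boundary_word :: "(nat \<times> nat) set \<Rightarrow> bool list" where
  "boundary_word F = concat (map (\<lambda>i. True # replicate (row_len F i - row_len F (i + 1)) False)
                                 [1..<num_rows F + 1])"

text \<open>The lattice point reached after k steps of the path with type sequence w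
  which starts on the x-axis and ends on the y-axis.\<close>
definition bpoint :: "bool list \<Rightarrow> nat \<Rightarrow> nat \<times> nat" where
  "bpoint w k = (count_list (drop k w) False, count_list (take k w) True)"

definition lattice_points :: "(nat \<times> nat) set \<Rightarrow> (nat \<times> nat) set" where
  "lattice_points F = {(x, y). \<exists>(i, j)\<in>F. (x = j - 1 \<or> x = j) \<and> (y = i - 1 \<or> y = i)}"

definition reflect :: "(nat \<times> nat) set \<Rightarrow> (nat \<times> nat) set" where
  "reflect F = (\<lambda>(i, j). (j, i)) ` F"

text \<open>Local rules, arguments: entry m, then corners kappa (bottom-left),
  mu (top-left), nu (bottom-right), rho (top-right).\<close>

definition rsk_rule :: "nat \<Rightarrow> partition \<Rightarrow> partition \<Rightarrow> partition \<Rightarrow> partition \<Rightarrow> bool" where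
  "rsk_rule m ka mu nu rho \<longleftrightarrow>
     is_partition ka \<and> is_partition mu \<and> is_partition nu \<and> is_partition rho \<and>
     prec ka mu \<and> prec ka nu \<and> prec mu rho \<and> prec nu rho \<and>
     part rho 1 = m + max (part mu 1) (part nu 1) \<and>
     (\<forall>i\<ge>2. part rho i + part ka (i - 1) =
              min (part mu (i - 1)) (part nu (i - 1)) + max (part mu i) (part nu i))"

definition drsk_rule :: "nat \<Rightarrow> nat \<Rightarrow> partition \<Rightarrow> partition \<Rightarrow> partition \<Rightarrow> partition \<Rightarrow> bool" where
  "drsk_rule d m ka mu nu rho \<longleftrightarrow>
     is_dpartition d ka \<and> is_dpartition d mu \<and> is_dpartition d nu \<and> is_dpartition d rho \<and>
     prec ka mu \<and> prec ka nu \<and> prec mu rho \<and> prec nu rho \<and>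
     (m = 0 \<or> part ka d = 0) \<and>
     part rho 1 + part ka d = m + min (part mu d) (part nu d) + max (part mu 1) (part nu 1) \<and>
     (\<forall>i. 2 \<le> i \<and> i \<le> d \<longrightarrow> part rho i + part ka (i - 1) =
              min (part mu (i - 1)) (part nu (i - 1)) + max (part mu i) (part nu i))"

definition growth_diagram ::
  "(nat \<Rightarrow> partition \<Rightarrow> partition \<Rightarrow> partition \<Rightarrow> partition \<Rightarrow> bool) \<Rightarrow>
   (nat \<times> nat) set \<Rightarrow> (nat \<times> nat \<Rightarrow> nat) \<Rightarrow> (nat \<times> nat \<Rightarrow> partition) \<Rightarrow> bool" where
  "growth_diagram R F f P \<longleftrightarrow>
     (\<forall>p\<in>lattice_points F. is_partition (P p)) \<and>
     (\<forall>(x, y)\<in>lattice_points F. x = 0 \<or> y = 0 \<longrightarrow> P (x, y) = pempty) \<and>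
     (\<forall>(i, j)\<in>F. R (f (i, j)) (P (j - 1, i - 1)) (P (j - 1, i)) (P (j, i - 1)) (P (j, i)))"

definition boundary_is :: "(nat \<times> nat) set \<Rightarrow> (nat \<times> nat \<Rightarrow> partition) \<Rightarrow> partition list \<Rightarrow> bool" where
  "boundary_is F P T \<longleftrightarrow> (\<forall>k\<le>length (boundary_word F). P (bpoint (boundary_word F) k) = T ! k)"

definition row_sum :: "(nat \<times> nat) set \<Rightarrow> (nat \<times> nat \<Rightarrow> nat) \<Rightarrow> nat \<Rightarrow> nat" where
  "row_sum F f i = (\<Sum>j\<in>{j. (i, j) \<in> F}. f (i, j))"

definition col_sum :: "(nat \<times> nat) set \<Rightarrow> (nat \<times> nat \<Rightarrow> nat) \<Rightarrow> nat \<Rightarrow> nat" where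
  "col_sum F f j = (\<Sum>i\<in>{i. (i, j) \<in> F}. f (i, j))"

end

theory Submission
  imports Defs
begin


lemma count_tf: "count_list xs True + count_list xs False = length (xs::bool list)"
  by (induction xs) auto

lemma bpoint_Suc:
  assumes "k < length w"
  shows "bpoint w (Suc k) = (if w!k then (fst (bpoint w k), Suc (snd (bpoint w k)))
                             else (fst (bpoint w k) - 1, snd (bpoint w k)))"
proof -
  have t: "take (Suc k) w = take k w @ [w!k]" using assms by (rule take_Suc_conv_app_nth)
  have d: "drop k w = w!k # drop (Suc k) w" using assms by (rule Cons_nth_drop_Suc[symmetric])
  have c1: "count_list (drop k w) False = count_list (drop (Suc k) w) False + (if w!k then 0 else 1)"
    by (subst d) simp
  have c2: "count_list (take (Suc k) w) True = count_list (take k w) True + (if w!k then 1 else 0)"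
    by (subst t) simp
  show ?thesis unfolding bpoint_def using c1 c2 by simp
qed

lemma bpoint_diff:
  assumes "k \<le> length w"
  shows "int (snd (bpoint w k)) + int (count_list w False) = int k + int (fst (bpoint w k))"
proof -
  have "count_list w False = count_list (take k w) False + count_list (drop k w) False"
    by (metis append_take_drop_id count_list_append)
  moreover have "count_list (take k w) True + count_list (take k w) False = k"
    using count_tf[of "take k w"] assms by simp
  ultimately show ?thesis unfolding bpoint_def by simp
qed

lemma count_take_Suc:
  "count_list (take (Suc n) w) x = count_list (take n w) x + (if n < length w \<and> w!n = x then 1 else 0)"
  by (cases "n < length w") (simp_all add: take_Suc_conv_app_nth)

lemma count_take_mono: "m \<le> n \<Longrightarrow> count_list (take m w) x \<le> count_list (take n w) x"
proof (induction n rule: dec_induct)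
  case base then show ?case by simp
next
  case (step n) then show ?case using count_take_Suc[of n w x] by simp
qed

lemma index_exists:
  "1 \<le> i \<Longrightarrow> i \<le> count_list w x \<Longrightarrow> \<exists>a. a \<in> {1..length w} \<and> w!(a-1) = x \<and> count_list (take a w) x = i"
proof (induction w arbitrary: i)
  case Nil then show ?case by simp
next
  case (Cons b w)
  show ?case
  proof (cases "b = x")
    case True
    show ?thesis
    proof (cases "i = 1")
      case True then show ?thesis using \<open>b = x\<close> by (intro exI[of _ 1]) simp
    next
      case False
      have "1 \<le> i-1" "i-1 \<le> count_list w x" using False Cons.prems \<open>b = x\<close> by auto
      from Cons.IH[OF this] obtain a where "a \<in> {1..length w}" "w!(a-1) = x" "count_list (take a w) x = i - 1"
        by blast
      then show ?thesis using \<open>b = x\<close> Cons.prems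
        by (intro exI[of _ "Suc a"]) (auto simp: nth_Cons')
    qed
  next
    case False
    then obtain a where "a \<in> {1..length w}" "w!(a-1) = x" "count_list (take a w) x = i"
      using Cons.IH[of "i"] Cons.prems by auto
    then show ?thesis using False
      by (intro exI[of _ "Suc a"]) (auto simp: nth_Cons')
  qed
qed

lemma index_unique:
  assumes "a \<in> {1..length w}" "w!(a-1) = x" "a' \<in> {1..length w}" "w!(a'-1) = x"
    "count_list (take a w) x = count_list (take a' w) x"
  shows "a = a'"
proof (rule ccontr)
  assume "a \<noteq> a'"
  then consider "a < a'" | "a' < a" by linarith
  then show False
  proof cases
    case 1
    have "count_list (take a w) x \<le> count_list (take (a'-1) w) x"
      using 1 by (intro count_take_mono) simp
    moreover have "count_list (take a' w) x = count_list (take (a'-1) w) x + 1"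
      using count_take_Suc[of "a'-1" w x] assms by (simp, linarith)
    ultimately show False using assms(5) by simp
  next
    case 2
    have "count_list (take a' w) x \<le> count_list (take (a-1) w) x"
      using 2 by (intro count_take_mono) simp
    moreover have "count_list (take a w) x = count_list (take (a-1) w) x + 1"
      using count_take_Suc[of "a-1" w x] assms by (simp, linarith)
    ultimately show False using assms(5) by simp
  qed
qed

lemma the_index:
  assumes "1 \<le> i" "i \<le> count_list w x"
  defines "a \<equiv> THE a. a \<in> {1..length w} \<and> w!(a-1) = x \<and> count_list (take a w) x = i"
  shows "a \<in> {1..length w} \<and> w!(a-1) = x \<and> count_list (take a w) x = i"
proof -
  obtain a0 where a0: "a0 \<in> {1..length w} \<and> w!(a0-1) = x \<and> count_list (take a0 w) x = i"
    using index_exists[OF assms(1,2)] by blast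
  have u: "b = a0" if "b \<in> {1..length w}" "w!(b-1) = x" "count_list (take b w) x = i" for b
    using index_unique[OF that(1,2), of a0] a0 that(3) by auto
  show ?thesis unfolding a_def
    by (rule theI[of _ a0]) (use a0 u in auto)
qed

lemma plus_index_props:
  assumes "1 \<le> i" "i \<le> count_list w True"
  shows "plus_index w i \<in> {1..length w} \<and> w!(plus_index w i - 1) \<and> count_list (take (plus_index w i) w) True = i"
  using the_index[OF assms] unfolding plus_index_def by simp

lemma minus_index_props:
  assumes "1 \<le> j" "j \<le> count_list w False"
  shows "minus_index w j \<in> {1..length w} \<and> \<not> w!(minus_index w j - 1) \<and> count_list (drop (minus_index w j - 1) w) False = j"
proof -
  let ?N = "count_list w False"
  have eq: "(b \<in> {1..length w} \<and> \<not> w!(b-1) \<and> count_list (drop (b-1) w) False = j) \<longleftrightarrow>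
        (b \<in> {1..length w} \<and> w!(b-1) = False \<and> count_list (take b w) False = ?N + 1 - j)" for b
  proof -
    have s: "?N = count_list (take (b-1) w) False + count_list (drop (b-1) w) False"
      by (metis append_take_drop_id count_list_append)
    have "b \<in> {1..length w} \<Longrightarrow> \<not> w!(b-1) \<Longrightarrow> count_list (take b w) False = count_list (take (b-1) w) False + 1"
      using count_take_Suc[of "b-1" w False] by (simp, linarith)
    then show ?thesis using s assms
    proof (cases "b \<in> {1..length w} \<and> \<not> w!(b-1)")
      case True then show ?thesis using s assms \<open>_ \<Longrightarrow> _ \<Longrightarrow> _\<close> by simp linarith
    next
      case False then show ?thesis by auto
    qed
  qed
  have "1 \<le> ?N + 1 - j" "?N + 1 - j \<le> ?N" using assms by auto
  from the_index[OF this] show ?thesis unfolding minus_index_def eq by simp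
qed




lemma init_seg:
  assumes "finite S" "\<forall>j\<in>S. 1 \<le> j" "\<forall>j\<in>S. \<forall>j'. 1 \<le> j' \<and> j' \<le> j \<longrightarrow> j' \<in> S"
  shows "S = {1..card S}"
proof (cases "S = {}")
  case True then show ?thesis by simp
next
  case False
  define n where "n = Max S"
  have "n \<in> S" using False assms(1) n_def by simp
  have "S = {1..n}"
  proof
    show "S \<subseteq> {1..n}" using assms(1,2) n_def by auto
    show "{1..n} \<subseteq> S" using assms(3) \<open>n \<in> S\<close> by auto
  qed
  then show ?thesis by simp
qed

lemma yd_row:
  assumes "young_diagram F" "1 \<le> i"
  shows "{j. (i, j) \<in> F} = {1..row_len F i}"
proof -
  have fin: "finite {j. (i, j) \<in> F}"
  proof -
    have "{j. (i, j) \<in> F} \<subseteq> snd ` F" by force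
    then show ?thesis using assms(1) unfolding young_diagram_def by (meson finite_imageI finite_subset)
  qed
  show ?thesis unfolding row_len_def
    by (rule init_seg[OF fin]) (use assms(1) in \<open>unfold young_diagram_def, blast+\<close>)
qed

lemma yd_col:
  assumes "young_diagram F" "1 \<le> j"
  shows "{i. (i, j) \<in> F} = {1..card {i. (i, j) \<in> F}}"
proof -
  have fin: "finite {i. (i, j) \<in> F}"
  proof -
    have "{i. (i, j) \<in> F} \<subseteq> fst ` F" by force
    then show ?thesis using assms(1) unfolding young_diagram_def by (meson finite_imageI finite_subset)
  qed
  show ?thesis
    by (rule init_seg[OF fin]) (use assms(1) in \<open>unfold young_diagram_def, blast+\<close>)
qed

lemma yd_pos: "young_diagram F \<Longrightarrow> (i, j) \<in> F \<Longrightarrow> 1 \<le> i \<and> 1 \<le> j"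
  unfolding young_diagram_def by blast

lemma yd_down: "young_diagram F \<Longrightarrow> (i, j) \<in> F \<Longrightarrow> 1 \<le> i' \<Longrightarrow> i' \<le> i \<Longrightarrow> 1 \<le> j' \<Longrightarrow> j' \<le> j \<Longrightarrow> (i', j') \<in> F"
  unfolding young_diagram_def by blast

lemma yd_mem:
  assumes "young_diagram F"
  shows "(i, j) \<in> F \<longleftrightarrow> 1 \<le> i \<and> 1 \<le> j \<and> j \<le> row_len F i"
proof (cases "1 \<le> i")
  case True then show ?thesis using yd_row[OF assms True] by (metis atLeastAtMost_iff mem_Collect_eq)
next
  case False then show ?thesis using yd_pos[OF assms] by blast
qed

lemma yd_col1:
  assumes "young_diagram F"
  shows "(i, 1) \<in> F \<longleftrightarrow> 1 \<le> i \<and> i \<le> num_rows F"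
  using yd_col[OF assms, of 1] unfolding num_rows_def by (metis atLeastAtMost_iff le_numeral_extra(4) mem_Collect_eq)

lemma yd_rowlen_pos:
  assumes "young_diagram F" "1 \<le> i"
  shows "1 \<le> row_len F i \<longleftrightarrow> i \<le> num_rows F"
  using yd_col1[OF assms(1), of i] yd_mem[OF assms(1), of i 1] assms(2) by auto

lemma yd_rowlen_zero:
  assumes "young_diagram F" "num_rows F < i"
  shows "row_len F i = 0"
proof (cases "i = 0")
  case True
  then have "{j. (i, j) \<in> F} = {}" using yd_pos[OF assms(1)] by fastforce
  then show ?thesis unfolding row_len_def by simp
next
  case False then show ?thesis using yd_rowlen_pos[OF assms(1), of i] assms(2) by auto
qed

lemma yd_mono:
  assumes "young_diagram F" "1 \<le> i"
  shows "row_len F (Suc i) \<le> row_len F i"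
proof (cases "row_len F (Suc i) = 0")
  case True then show ?thesis by simp
next
  case False
  then have "(Suc i, row_len F (Suc i)) \<in> F" using yd_mem[OF assms(1)] by simp
  then have "(i, row_len F (Suc i)) \<in> F" using yd_down[OF assms(1)] assms(2) False by fastforce
  then show ?thesis using yd_mem[OF assms(1)] by simp
qed

lemma yd_lp_bound:
  assumes "young_diagram F" "(x, y) \<in> lattice_points F"
  shows "x \<le> row_len F 1 \<and> y \<le> num_rows F"
proof -
  obtain i j where ij: "(i, j) \<in> F" "x = j - 1 \<or> x = j" "y = i - 1 \<or> y = i"
    using assms(2) unfolding lattice_points_def by auto
  have "(1, j) \<in> F" "(i, 1) \<in> F" using yd_down[OF assms(1) ij(1)] yd_pos[OF assms(1) ij(1)] by auto
  then have "j \<le> row_len F 1" "i \<le> num_rows F" using yd_mem[OF assms(1)] yd_col1[OF assms(1)] by auto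
  then show ?thesis using ij by auto
qed

definition Bset :: "(nat \<times> nat) set \<Rightarrow> (nat \<times> nat) set" where
  "Bset F = {p \<in> lattice_points F. (snd p + 1, fst p + 1) \<notin> F}"

lemma staircase:
  assumes "young_diagram F" "(x, y) \<in> Bset F" "(x', y') \<in> Bset F"
    "int y - int x = int y' - int x'"
  shows "x = x' \<and> y = y'"
proof -
  have key: False if k1: "(a, b) \<in> Bset F" and k2: "(a', b') \<in> Bset F" and k3: "b < b'" and k4: "a < a'" for a b a' b'
  proof -
    obtain i j where ij: "(i, j) \<in> F" "a' = j - 1 \<or> a' = j" "b' = i - 1 \<or> b' = i"
      using k2 unfolding Bset_def lattice_points_def by auto
    have "(b + 1, a + 1) \<in> F"
      using yd_down[OF assms(1) ij(1)] k3 k4 ij(2,3) by auto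
    then show False using k1 unfolding Bset_def by simp
  qed
  consider "y < y'" | "y = y'" | "y' < y" by linarith
  then show ?thesis
  proof cases
    case 1
    moreover have "x < x'" using 1 assms(4) by linarith
    ultimately show ?thesis using key[OF assms(2,3)] by blast
  next
    case 2 then show ?thesis using assms(4) by simp
  next
    case 3
    moreover have "x' < x" using 3 assms(4) by linarith
    ultimately show ?thesis using key[OF assms(3,2)] by blast
  qed
qed




definition blk :: "(nat \<times> nat) set \<Rightarrow> nat \<Rightarrow> bool list" where
  "blk F i = True # replicate (row_len F i - row_len F (i + 1)) False"

lemma boundary_word_blk: "boundary_word F = concat (map (blk F) [1..<num_rows F + 1])"
  unfolding boundary_word_def blk_def by simp

lemma bpoint_append:
  "bpoint (u @ v) k = (count_list (drop k u) False + count_list (drop (k - length u) v) False,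
                       count_list (take k u) True + count_list (take (k - length u) v) True)"
  unfolding bpoint_def by simp

lemma count_replicate: "count_list (replicate n x) y = (if x = y then n else 0)"
  by (induction n) auto

lemma suffix_props:
  assumes yd: "young_diagram F" and "M = num_rows F" and "L = row_len F"
  shows "1 \<le> a \<Longrightarrow> a \<le> M + 1 \<Longrightarrow> v = concat (map (blk F) [a..<M+1]) \<Longrightarrow>
    length v = (M + 1 - a) + L a \<and> count_list v True = M + 1 - a \<and> count_list v False = L a \<and>
    (\<forall>k \<le> length v. snd (bpoint v k) \<le> M + 1 - a \<and>
        (snd (bpoint v k) = 0 \<longrightarrow> fst (bpoint v k) = L a) \<and>
        (snd (bpoint v k) \<noteq> 0 \<longrightarrow> L (a + snd (bpoint v k)) \<le> fst (bpoint v k) \<and>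
                                   fst (bpoint v k) \<le> L (a + snd (bpoint v k) - 1)))"
proof (induction "M + 1 - a" arbitrary: a v)
  case 0
  then have a: "a = M + 1" by simp
  then have "L a = 0" using yd_rowlen_zero[OF yd] assms(2,3) by simp
  then show ?case using 0 a by (simp add: bpoint_def)
next
  case (Suc n)
  define v' where "v' = concat (map (blk F) [Suc a..<M+1])"
  define l where "l = L a - L (Suc a)"
  have aM: "a \<le> M" using Suc by simp
  have mono: "L (Suc a) \<le> L a" using yd_mono[OF yd] Suc.prems assms(3) by simp
  have "[a..<M+1] = a # [Suc a..<M+1]" by (rule upt_conv_Cons) (use aM in simp)
  then have v: "v = blk F a @ v'" using Suc.prems(3) unfolding v'_def by (simp del: upt_Suc)
  have u: "blk F a = True # replicate l False" unfolding blk_def l_def assms(3) by simp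
  have IH: "length v' = (M + 1 - Suc a) + L (Suc a) \<and> count_list v' True = M + 1 - Suc a \<and> count_list v' False = L (Suc a) \<and>
    (\<forall>k \<le> length v'. snd (bpoint v' k) \<le> M + 1 - Suc a \<and>
        (snd (bpoint v' k) = 0 \<longrightarrow> fst (bpoint v' k) = L (Suc a)) \<and>
        (snd (bpoint v' k) \<noteq> 0 \<longrightarrow> L (Suc a + snd (bpoint v' k)) \<le> fst (bpoint v' k) \<and>
                                   fst (bpoint v' k) \<le> L (Suc a + snd (bpoint v' k) - 1)))"
    using Suc.hyps(1)[of "Suc a" v'] Suc.hyps(2) aM v'_def by simp
  have len: "length v = (M + 1 - a) + L a" using v u IH mono aM l_def by simp
  have cT: "count_list v True = M + 1 - a" using v u IH aM by (simp add: count_replicate)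
  have cF: "count_list v False = L a" using v u IH mono l_def by (simp add: count_replicate)
  have pts: "snd (bpoint v k) \<le> M + 1 - a \<and>
        (snd (bpoint v k) = 0 \<longrightarrow> fst (bpoint v k) = L a) \<and>
        (snd (bpoint v k) \<noteq> 0 \<longrightarrow> L (a + snd (bpoint v k)) \<le> fst (bpoint v k) \<and>
                                   fst (bpoint v k) \<le> L (a + snd (bpoint v k) - 1))"
    if k: "k \<le> length v" for k
  proof (cases "k \<le> Suc l")
    case True
    show ?thesis
    proof (cases k)
      case 0
      then have "bpoint v k = (L a, 0)" using v u IH mono l_def by (simp add: bpoint_def count_replicate)
      then show ?thesis by simp
    next
      case (Suc t)
      then have "bpoint v k = (l - t + L (Suc a), 1)" using v u IH True
        by (simp add: bpoint_def count_replicate)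
      then show ?thesis using Suc True l_def mono aM by auto
    qed
  next
    case False
    define k' where "k' = k - Suc l"
    have k'le: "k' \<le> length v'" using k v u k'_def by simp
    have bp: "bpoint v k = (fst (bpoint v' k'), Suc (snd (bpoint v' k')))"
      unfolding v u bpoint_append using False k'_def by (simp add: bpoint_def count_replicate)
    have IHk: "snd (bpoint v' k') \<le> M + 1 - Suc a \<and>
        (snd (bpoint v' k') = 0 \<longrightarrow> fst (bpoint v' k') = L (Suc a)) \<and>
        (snd (bpoint v' k') \<noteq> 0 \<longrightarrow> L (Suc a + snd (bpoint v' k')) \<le> fst (bpoint v' k') \<and>
                                   fst (bpoint v' k') \<le> L (Suc a + snd (bpoint v' k') - 1))"
      using IH k'le by blast
    show ?thesis
    proof (cases "snd (bpoint v' k') = 0")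
      case True then show ?thesis using bp IHk mono aM by simp
    next
      case False then show ?thesis using bp IHk aM by auto
    qed
  qed
  show ?case using len cT cF pts by blast
qed




lemma yd_11: "young_diagram F \<Longrightarrow> F \<noteq> {} \<Longrightarrow> (1, 1) \<in> F"
  using yd_down yd_pos by (metis equals0I order_refl surj_pair)

lemma bw_props:
  assumes yd: "young_diagram F" and ne: "F \<noteq> {}"
  shows "length (boundary_word F) = num_rows F + row_len F 1 \<and>
         count_list (boundary_word F) True = num_rows F \<and>
         count_list (boundary_word F) False = row_len F 1 \<and>
         (\<forall>k \<le> length (boundary_word F). bpoint (boundary_word F) k \<in> Bset F)"
proof -
  let ?w = "boundary_word F" and ?M = "num_rows F" and ?L = "row_len F"
  have S: "length ?w = (?M + 1 - 1) + ?L 1 \<and> count_list ?w True = ?M + 1 - 1 \<and> count_list ?w False = ?L 1 \<and>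
    (\<forall>k \<le> length ?w. snd (bpoint ?w k) \<le> ?M + 1 - 1 \<and>
        (snd (bpoint ?w k) = 0 \<longrightarrow> fst (bpoint ?w k) = ?L 1) \<and>
        (snd (bpoint ?w k) \<noteq> 0 \<longrightarrow> ?L (1 + snd (bpoint ?w k)) \<le> fst (bpoint ?w k) \<and>
                                   fst (bpoint ?w k) \<le> ?L (1 + snd (bpoint ?w k) - 1)))"
    by (rule suffix_props[OF yd refl refl]) (simp_all add: boundary_word_blk)
  have c11: "(1, 1) \<in> F" using yd_11[OF yd ne] .
  have L1: "1 \<le> ?L 1" using yd_mem[OF yd, of 1 1] c11 by simp
  have inB: "(x, y) \<in> Bset F" if "y \<le> ?M" "y = 0 \<longrightarrow> x = ?L 1"
     "y \<noteq> 0 \<longrightarrow> ?L (1 + y) \<le> x \<and> x \<le> ?L y" for x y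
  proof -
    have notin: "(y + 1, x + 1) \<notin> F"
      using that yd_mem[OF yd, of "y+1" "x+1"] by (cases "y = 0") auto
    have lp: "(x, y) \<in> lattice_points F"
    proof (cases "y = 0")
      case True
      have "(1, ?L 1) \<in> F" using yd_mem[OF yd] L1 by simp
      then show ?thesis unfolding lattice_points_def using True that(2) by force
    next
      case False
      show ?thesis
      proof (cases "x = 0")
        case True
        have "(y, 1) \<in> F" using yd_col1[OF yd] False that(1) by simp
        then show ?thesis unfolding lattice_points_def using True by force
      next
        case x0: False
        have "(y, x) \<in> F" using yd_mem[OF yd] False x0 that(3) by simp
        then show ?thesis unfolding lattice_points_def by force
      qed
    qed
    show ?thesis unfolding Bset_def using notin lp by simp
  qed
  have "\<forall>k \<le> length ?w. bpoint ?w k \<in> Bset F"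
  proof (intro allI impI)
    fix k assume "k \<le> length ?w"
    then have "snd (bpoint ?w k) \<le> ?M" "snd (bpoint ?w k) = 0 \<longrightarrow> fst (bpoint ?w k) = ?L 1"
      "snd (bpoint ?w k) \<noteq> 0 \<longrightarrow> ?L (1 + snd (bpoint ?w k)) \<le> fst (bpoint ?w k) \<and> fst (bpoint ?w k) \<le> ?L (snd (bpoint ?w k))"
      using S by auto
    from inB[OF this] show "bpoint ?w k \<in> Bset F" by simp
  qed
  then show ?thesis using S by simp
qed

lemma bset_index:
  assumes yd: "young_diagram F" and ne: "F \<noteq> {}" and p: "(x, y) \<in> Bset F"
  shows "y + row_len F 1 - x \<le> length (boundary_word F) \<and> bpoint (boundary_word F) (y + row_len F 1 - x) = (x, y)"
proof -
  let ?w = "boundary_word F"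
  note bw = bw_props[OF yd ne]
  have b: "x \<le> row_len F 1" "y \<le> num_rows F" using yd_lp_bound[OF yd] p unfolding Bset_def by auto
  define k where "k = y + row_len F 1 - x"
  have kle: "k \<le> length ?w" using b bw k_def by simp
  have "bpoint ?w k \<in> Bset F" using bw kle by blast
  moreover have "int (snd (bpoint ?w k)) - int (fst (bpoint ?w k)) = int y - int x"
    using bpoint_diff[OF kle] bw b k_def by simp
  ultimately have "bpoint ?w k = (x, y)"
    using staircase[OF yd _ p, of "fst (bpoint ?w k)" "snd (bpoint ?w k)"] by (metis prod.collapse)
  then show ?thesis using kle k_def by simp
qed

lemma reflect_mem: "(i, j) \<in> reflect F \<longleftrightarrow> (j, i) \<in> F"
  unfolding reflect_def by force

lemma reflect_yd:
  assumes "young_diagram F" shows "young_diagram (reflect F)"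
  unfolding young_diagram_def
proof (intro conjI ballI allI impI)
  show "finite (reflect F)" using assms unfolding young_diagram_def reflect_def by simp
next
  fix p assume "p \<in> reflect F"
  then obtain i j where "p = (i, j)" "(j, i) \<in> F" using reflect_mem by (metis surj_pair)
  then show "case p of (i, j) \<Rightarrow> 1 \<le> i \<and> 1 \<le> j" using yd_pos[OF assms] by auto
next
  fix p i' j' assume "p \<in> reflect F"
  then obtain i j where ij: "p = (i, j)" "(j, i) \<in> F" using reflect_mem by (metis surj_pair)
  show "case p of (i, j) \<Rightarrow> \<forall>i' j'. 1 \<le> i' \<and> i' \<le> i \<and> 1 \<le> j' \<and> j' \<le> j \<longrightarrow> (i', j') \<in> reflect F"
    using ij yd_down[OF assms ij(2)] by (auto simp: reflect_mem)
qed

lemma reflect_lp: "lattice_points (reflect F) = prod.swap ` lattice_points F"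
  unfolding lattice_points_def reflect_def by force

lemma reflect_bset: "(x, y) \<in> Bset (reflect F) \<longleftrightarrow> (y, x) \<in> Bset F"
  unfolding Bset_def reflect_lp by (auto simp: reflect_mem)

lemma reflect_rows: "num_rows (reflect F) = row_len F 1"
  unfolding num_rows_def row_len_def by (simp add: reflect_mem)

lemma reflect_cols: "row_len (reflect F) 1 = num_rows F"
  unfolding num_rows_def row_len_def by (simp add: reflect_mem)

lemma reflect_bpoint:
  assumes yd: "young_diagram F" and ne: "F \<noteq> {}"
    and k: "k \<le> length (boundary_word (reflect F))"
  shows "length (boundary_word (reflect F)) = length (boundary_word F) \<and>
    prod.swap (bpoint (boundary_word (reflect F)) k) = bpoint (boundary_word F) (length (boundary_word F) - k)"
proof -
  let ?w = "boundary_word F" and ?w' = "boundary_word (reflect F)"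
  have yd': "young_diagram (reflect F)" using reflect_yd[OF yd] .
  have ne': "reflect F \<noteq> {}" using ne unfolding reflect_def by simp
  note bw = bw_props[OF yd ne] and bw' = bw_props[OF yd' ne']
  have len: "length ?w' = length ?w" using bw bw' reflect_rows reflect_cols by simp
  obtain x y where xy: "bpoint ?w' k = (x, y)" by fastforce
  have "(x, y) \<in> Bset (reflect F)" using bw' k xy by metis
  then have yx: "(y, x) \<in> Bset F" using reflect_bset by blast
  have d': "int y + int (num_rows F) = int k + int x"
    using bpoint_diff[OF k] xy bw' reflect_rows reflect_cols by simp
  have k2: "length ?w - k \<le> length ?w" by simp
  have "bpoint ?w (length ?w - k) \<in> Bset F" using bw k2 by blast
  moreover have "int (snd (bpoint ?w (length ?w - k))) - int (fst (bpoint ?w (length ?w - k))) = int x - int y"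
    using bpoint_diff[OF k2] bw d' k len by simp
  ultimately have "bpoint ?w (length ?w - k) = (y, x)"
    using staircase[OF yd _ yx, of "fst (bpoint ?w (length ?w - k))" "snd (bpoint ?w (length ?w - k))"]
    by (metis prod.collapse)
  then show ?thesis using len xy by simp
qed




lemma psize_sum:
  assumes "\<forall>i\<ge>n. lam i = 0"
  shows "psize lam = sum lam {..<n}"
proof -
  have sub: "{i. lam i \<noteq> 0} \<subseteq> {..<n}" using assms by (metis (mono_tags) lessThan_iff mem_Collect_eq subsetI leI)
  show ?thesis unfolding psize_def by (rule sum.mono_neutral_left) (use sub in auto)
qed

lemma psize_empty: "psize pempty = 0"
  unfolding psize_def pempty_def by simp

lemma rsk_size:
  assumes "rsk_rule m ka mu nu rho"
  shows "m + psize mu + psize nu = psize rho + psize ka"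
proof -
  have pr: "is_partition ka" "is_partition mu" "is_partition nu" "is_partition rho"
    and e1: "rho 0 = m + max (mu 0) (nu 0)"
    and e2: "\<And>i. rho (Suc i) + ka i = min (mu i) (nu i) + max (mu (Suc i)) (nu (Suc i))"
  proof -
    show "is_partition ka" "is_partition mu" "is_partition nu" "is_partition rho"
      using assms unfolding rsk_rule_def by blast+
    have "part rho 1 = m + max (part mu 1) (part nu 1)" using assms unfolding rsk_rule_def by blast
    then show "rho 0 = m + max (mu 0) (nu 0)" unfolding part_def by simp
    fix i
    have A: "\<forall>i\<ge>2. part rho i + part ka (i - 1) =
              min (part mu (i - 1)) (part nu (i - 1)) + max (part mu i) (part nu i)"
      using assms unfolding rsk_rule_def by blast
    have "part rho (Suc (Suc i)) + part ka (Suc (Suc i) - 1) =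
          min (part mu (Suc (Suc i) - 1)) (part nu (Suc (Suc i) - 1)) + max (part mu (Suc (Suc i))) (part nu (Suc (Suc i)))"
      using A[rule_format, of "Suc (Suc i)"] by simp
    then show "rho (Suc i) + ka i = min (mu i) (nu i) + max (mu (Suc i)) (nu (Suc i))"
      unfolding part_def by simp
  qed
  obtain n1 n2 n3 n4 where z: "\<forall>i\<ge>n1. ka i = 0" "\<forall>i\<ge>n2. mu i = 0" "\<forall>i\<ge>n3. nu i = 0" "\<forall>i\<ge>n4. rho i = 0"
    using pr unfolding is_partition_def by blast
  define n where "n = n1 + n2 + n3 + n4"
  have zz: "\<forall>i\<ge>n. ka i = 0 \<and> mu i = 0 \<and> nu i = 0 \<and> rho i = 0"
    using z unfolding n_def by (meson le_add1 le_add2 add_leE le_trans)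
  have ind: "sum rho {..<Suc k} + sum ka {..<k} = m + (\<Sum>i<k. min (mu i) (nu i)) + (\<Sum>i<Suc k. max (mu i) (nu i))" for k
  proof (induction k)
    case 0 then show ?case using e1 by simp
  next
    case (Suc k) then show ?case using e2[of k] by simp
  qed
  have mm: "(\<Sum>i<n. min (mu i) (nu i)) + (\<Sum>i<n. max (mu i) (nu i)) = sum mu {..<n} + sum nu {..<n}"
  proof -
    have "(\<Sum>i<n. min (mu i) (nu i)) + (\<Sum>i<n. max (mu i) (nu i)) = (\<Sum>i<n. min (mu i) (nu i) + max (mu i) (nu i))"
      by (rule sum.distrib[symmetric])
    also have "\<dots> = (\<Sum>i<n. mu i + nu i)" by (rule sum.cong) auto
    also have "\<dots> = sum mu {..<n} + sum nu {..<n}" by (rule sum.distrib)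
    finally show ?thesis .
  qed
  have "sum rho {..<Suc n} = sum rho {..<n}" using zz by simp
  moreover have "(\<Sum>i<Suc n. max (mu i) (nu i)) = (\<Sum>i<n. max (mu i) (nu i))" using zz by simp
  moreover have "psize rho = sum rho {..<n}" "psize ka = sum ka {..<n}" "psize mu = sum mu {..<n}" "psize nu = sum nu {..<n}"
    using zz by (simp_all add: psize_sum)
  ultimately show ?thesis using ind[of n] mm by simp
qed


lemma dpart_zero:
  assumes "is_dpartition d lam" "d \<le> i" shows "lam i = 0"
proof -
  have A: "\<forall>i>d. part lam i = 0" using assms(1) unfolding is_dpartition_def by blast
  have "part lam (Suc i) = 0" using A[rule_format, of "Suc i"] assms(2) by simp
  then show ?thesis unfolding part_def by simp
qed

lemma drsk_facts:
  assumes "drsk_rule d m ka mu nu rho" "d = Suc D"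
  shows "\<forall>i\<ge>d. ka i = 0 \<and> mu i = 0 \<and> nu i = 0 \<and> rho i = 0"
    and "m = 0 \<or> ka D = 0"
    and "rho 0 + ka D = m + min (mu D) (nu D) + max (mu 0) (nu 0)"
    and "\<And>i. i < D \<Longrightarrow> rho (Suc i) + ka i = min (mu i) (nu i) + max (mu (Suc i)) (nu (Suc i))"
proof -
  have dp: "is_dpartition d ka" "is_dpartition d mu" "is_dpartition d nu" "is_dpartition d rho"
    using assms(1) unfolding drsk_rule_def by (simp_all only: simp_thms)
  show "\<forall>i\<ge>d. ka i = 0 \<and> mu i = 0 \<and> nu i = 0 \<and> rho i = 0" using dpart_zero[OF dp(1)] dpart_zero[OF dp(2)] dpart_zero[OF dp(3)] dpart_zero[OF dp(4)] by simp
  have "m = 0 \<or> part ka d = 0" using assms(1) unfolding drsk_rule_def by (elim conjE) assumption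
  then show "m = 0 \<or> ka D = 0" using assms(2) unfolding part_def by simp
  have "part rho 1 + part ka d = m + min (part mu d) (part nu d) + max (part mu 1) (part nu 1)"
    using assms(1) unfolding drsk_rule_def by blast
  then show "rho 0 + ka D = m + min (mu D) (nu D) + max (mu 0) (nu 0)" using assms(2) unfolding part_def by simp
  fix i assume i: "i < D"
  have A: "\<forall>i. 2 \<le> i \<and> i \<le> d \<longrightarrow> part rho i + part ka (i - 1) =
              min (part mu (i - 1)) (part nu (i - 1)) + max (part mu i) (part nu i)"
    using assms(1) unfolding drsk_rule_def by blast
  have "part rho (Suc (Suc i)) + part ka (Suc (Suc i) - 1) =
          min (part mu (Suc (Suc i) - 1)) (part nu (Suc (Suc i) - 1)) + max (part mu (Suc (Suc i))) (part nu (Suc (Suc i)))"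
    using A[rule_format, of "Suc (Suc i)"] i assms(2) by simp
  then show "rho (Suc i) + ka i = min (mu i) (nu i) + max (mu (Suc i)) (nu (Suc i))"
    unfolding part_def by simp
qed

lemma drsk_size:
  assumes "drsk_rule d m ka mu nu rho" "0 < d"
  shows "m + psize mu + psize nu = psize rho + psize ka"
proof -
  obtain D where D: "d = Suc D" using assms(2) by (metis gr0_implies_Suc)
  note F = drsk_facts[OF assms(1) D]
  have ind: "k \<le> D \<Longrightarrow> sum rho {..<Suc k} + sum ka {..<k} + ka D =
     m + min (mu D) (nu D) + (\<Sum>i<k. min (mu i) (nu i)) + (\<Sum>i<Suc k. max (mu i) (nu i))" for k
  proof (induction k)
    case 0 then show ?case using F(3) by simp
  next
    case (Suc k) then show ?case using F(4)[of k] by simp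
  qed
  have mm: "(\<Sum>i<d. min (mu i) (nu i)) + (\<Sum>i<d. max (mu i) (nu i)) = sum mu {..<d} + sum nu {..<d}"
  proof -
    have "(\<Sum>i<d. min (mu i) (nu i)) + (\<Sum>i<d. max (mu i) (nu i)) = (\<Sum>i<d. min (mu i) (nu i) + max (mu i) (nu i))"
      by (rule sum.distrib[symmetric])
    also have "\<dots> = (\<Sum>i<d. mu i + nu i)" by (rule sum.cong) auto
    also have "\<dots> = sum mu {..<d} + sum nu {..<d}" by (rule sum.distrib)
    finally show ?thesis .
  qed
  have "psize rho = sum rho {..<d}" "psize ka = sum ka {..<d}" "psize mu = sum mu {..<d}" "psize nu = sum nu {..<d}"
    using F(1) by (simp_all add: psize_sum)
  then show ?thesis using ind[of D] mm D by simp
qed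

lemma rsk_det:
  assumes "rsk_rule m ka mu nu rho" "rsk_rule m' ka' mu nu rho"
  shows "m = m' \<and> ka = ka'"
proof
  show "m = m'" using assms unfolding rsk_rule_def by simp
  show "ka = ka'"
  proof
    fix i
    have A: "\<forall>i\<ge>2. part rho i + part ka (i - 1) =
              min (part mu (i - 1)) (part nu (i - 1)) + max (part mu i) (part nu i)"
      using assms(1) unfolding rsk_rule_def by blast
    have B: "\<forall>i\<ge>2. part rho i + part ka' (i - 1) =
              min (part mu (i - 1)) (part nu (i - 1)) + max (part mu i) (part nu i)"
      using assms(2) unfolding rsk_rule_def by blast
    show "ka i = ka' i" using A[rule_format, of "Suc (Suc i)"] B[rule_format, of "Suc (Suc i)"]
      unfolding part_def by simp
  qed
qed

lemma drsk_det:
  assumes "drsk_rule d m ka mu nu rho" "drsk_rule d m' ka' mu nu rho" "0 < d"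
  shows "m = m' \<and> ka = ka'"
proof -
  obtain D where D: "d = Suc D" using assms(3) by (metis gr0_implies_Suc)
  note F = drsk_facts[OF assms(1) D] and G = drsk_facts[OF assms(2) D]
  have kD: "m = m' \<and> ka D = ka' D" using F(2,3) G(2,3) by linarith
  have "ka i = ka' i" for i
  proof -
    consider "i < D" | "i = D" | "d \<le> i" using D by linarith
    then show ?thesis
    proof cases
      case 1 then show ?thesis using F(4)[OF 1] G(4)[OF 1] by simp
    next
      case 2 then show ?thesis using kD by simp
    next
      case 3 then show ?thesis using F(1) G(1) by simp
    qed
  qed
  then show ?thesis using kD by auto
qed

lemma rsk_sym: "rsk_rule m ka mu nu rho \<Longrightarrow> rsk_rule m ka nu mu rho"
  unfolding rsk_rule_def by (simp add: min.commute max.commute)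

lemma drsk_sym: "drsk_rule d m ka mu nu rho \<Longrightarrow> drsk_rule d m ka nu mu rho"
  unfolding drsk_rule_def by (simp add: min.commute max.commute)


lemma gd_cell:
  "growth_diagram R F f P \<Longrightarrow> (i, j) \<in> F \<Longrightarrow> R (f (i, j)) (P (j - 1, i - 1)) (P (j - 1, i)) (P (j, i - 1)) (P (j, i))"
  unfolding growth_diagram_def by blast

lemma gd_axis:
  "growth_diagram R F f P \<Longrightarrow> (x, y) \<in> lattice_points F \<Longrightarrow> x = 0 \<or> y = 0 \<Longrightarrow> P (x, y) = pempty"
  unfolding growth_diagram_def by blast

lemma lp_corner:
  "(i, j) \<in> F \<Longrightarrow> (a = j - 1 \<or> a = j) \<Longrightarrow> (b = i - 1 \<or> b = i) \<Longrightarrow> (a, b) \<in> lattice_points F"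
  unfolding lattice_points_def by blast

lemma lp_finite:
  assumes "finite F" shows "finite (lattice_points F)"
proof -
  have "lattice_points F \<subseteq> (\<lambda>(i, j). (j - 1, i - 1)) ` F \<union> (\<lambda>(i, j). (j - 1, i)) ` F \<union>
        (\<lambda>(i, j). (j, i - 1)) ` F \<union> (\<lambda>(i, j). (j, i)) ` F"
    unfolding lattice_points_def by force
  then show ?thesis using assms by (meson finite_UnI finite_imageI finite_subset)
qed

lemma gd_unique:
  assumes fin: "finite F" and g1: "growth_diagram R F f1 P1" and g2: "growth_diagram R F f2 P2"
    and det: "\<And>m ka mu nu rho m' ka'. R m ka mu nu rho \<Longrightarrow> R m' ka' mu nu rho \<Longrightarrow> m = m' \<and> ka = ka'"
    and agree: "\<And>p. p \<in> Bset F \<Longrightarrow> P1 p = P2 p"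
  shows "\<forall>p\<in>lattice_points F. P1 p = P2 p" and "\<forall>c\<in>F. f1 c = f2 c"
proof -
  define C where "C = Max ((\<lambda>(x, y). x + y) ` lattice_points F)"
  have finLP: "finite (lattice_points F)" using lp_finite[OF fin] .
  have Cb: "x + y \<le> C" if "(x, y) \<in> lattice_points F" for x y
    unfolding C_def using finLP that by (metis (mono_tags, lifting) Max_ge case_prod_conv finite_imageI image_eqI)
  have main: "\<And>x y. n = C - (x + y) \<Longrightarrow> (x, y) \<in> lattice_points F \<Longrightarrow> P1 (x, y) = P2 (x, y)" for n
  proof (induction n rule: less_induct)
    case (less n)
    fix x y assume n: "n = C - (x + y)" and p: "(x, y) \<in> lattice_points F"
    show "P1 (x, y) = P2 (x, y)"
    proof (cases "(x, y) \<in> Bset F")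
      case True then show ?thesis using agree by blast
    next
      case False
      then have c: "(Suc y, Suc x) \<in> F" using p unfolding Bset_def by simp
      have l1: "(x, Suc y) \<in> lattice_points F" "(Suc x, y) \<in> lattice_points F" "(Suc x, Suc y) \<in> lattice_points F"
        using lp_corner[OF c] by auto
      have e1: "P1 (x, Suc y) = P2 (x, Suc y)"
        using less.IH[of "C - (x + Suc y)" x "Suc y"] l1(1) Cb[OF l1(1)] n by simp
      have e2: "P1 (Suc x, y) = P2 (Suc x, y)"
        using less.IH[of "C - (Suc x + y)" "Suc x" y] l1(2) Cb[OF l1(2)] n by simp
      have e3: "P1 (Suc x, Suc y) = P2 (Suc x, Suc y)"
        using less.IH[of "C - (Suc x + Suc y)" "Suc x" "Suc y"] l1(3) Cb[OF l1(3)] n by simp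
      have r1: "R (f1 (Suc y, Suc x)) (P1 (x, y)) (P1 (x, Suc y)) (P1 (Suc x, y)) (P1 (Suc x, Suc y))"
        using gd_cell[OF g1 c] by simp
      have r2: "R (f2 (Suc y, Suc x)) (P2 (x, y)) (P1 (x, Suc y)) (P1 (Suc x, y)) (P1 (Suc x, Suc y))"
        using gd_cell[OF g2 c] e1 e2 e3 by simp
      show ?thesis using det[OF r1 r2] by simp
    qed
  qed
  show A: "\<forall>p\<in>lattice_points F. P1 p = P2 p" using main by auto
  show "\<forall>c\<in>F. f1 c = f2 c"
  proof
    fix c assume c: "c \<in> F"
    obtain i j where ij: "c = (i, j)" by fastforce
    have cF: "(i, j) \<in> F" using c ij by simp
    have r1: "R (f1 (i, j)) (P1 (j - 1, i - 1)) (P1 (j - 1, i)) (P1 (j, i - 1)) (P1 (j, i))"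
      using gd_cell[OF g1 cF] .
    have r2: "R (f2 (i, j)) (P1 (j - 1, i - 1)) (P1 (j - 1, i)) (P1 (j, i - 1)) (P1 (j, i))"
      using gd_cell[OF g2 cF] A lp_corner[OF cF] by simp
    show "f1 c = f2 c" using det[OF r1 r2] ij by simp
  qed
qed

lemma telescope: "(\<Sum>k\<in>{1..(n::nat)}. (g k - g (k - 1) :: int)) = g n - g 0"
  by (induction n) auto

lemma part1:
  assumes yd: "young_diagram F" and ne: "F \<noteq> {}" and g: "growth_diagram R F f P"
    and bd: "boundary_is F P T"
    and sz: "\<And>m ka mu nu rho. R m ka mu nu rho \<Longrightarrow> m + psize mu + psize nu = psize rho + psize ka"
  shows "(\<forall>i\<in>{1..num_rows F}. int (row_sum F f i) = wt_plus (boundary_word F) T i) \<and>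
         (\<forall>j\<in>{1..num_cols F}. int (col_sum F f j) = wt_minus (boundary_word F) T j)"
proof -
  let ?w = "boundary_word F" and ?L = "row_len F" and ?M = "num_rows F"
  note bw = bw_props[OF yd ne]
  have PT: "P (bpoint ?w k) = T ! k" if "k \<le> length ?w" for k using bd that unfolding boundary_is_def by blast
  have cell: "int (f (i, j)) = (int (psize (P (j, i))) - int (psize (P (j - 1, i)))) - (int (psize (P (j, i - 1))) - int (psize (P (j - 1, i - 1))))"
    if "(i, j) \<in> F" for i j
    using sz[OF gd_cell[OF g that]] by linarith
  have rows: "int (row_sum F f i) = wt_plus ?w T i" if i: "i \<in> {1..?M}" for i
  proof -
    define a where "a = plus_index ?w i"
    have ap: "a \<in> {1..length ?w} \<and> ?w!(a-1) \<and> count_list (take a ?w) True = i"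
      using plus_index_props[of i ?w] i bw unfolding a_def by simp
    have bs: "bpoint ?w a = (fst (bpoint ?w (a - 1)), Suc (snd (bpoint ?w (a - 1))))"
    proof -
      have lt: "a - 1 < length ?w" using ap by auto
      have "Suc (a - 1) = a" using ap by auto
      then show ?thesis using bpoint_Suc[OF lt] ap by simp
    qed
    define x where "x = fst (bpoint ?w (a - 1))"
    have sa: "snd (bpoint ?w a) = i" using ap unfolding bpoint_def by simp
    have si: "Suc (snd (bpoint ?w (a - 1))) = i" using bs sa by simp
    have b1: "bpoint ?w a = (x, i)" using bs si x_def by simp
    have b0: "bpoint ?w (a - 1) = (x, i - 1)" using si x_def by (auto simp: prod_eq_iff)
    have in1: "(x, i) \<in> Bset F" using bw ap b1 by (metis atLeastAtMost_iff)
    have in0: "(x, i - 1) \<in> Bset F" using bw ap b0 by (metis atLeastAtMost_iff diff_le_self le_trans)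
    have i1: "1 \<le> i" "i \<le> ?M" using i by auto
    have Lpos: "1 \<le> ?L i" using yd_rowlen_pos[OF yd i1(1)] i1 by simp
    have xge: "?L i \<le> x" using in0 i1 yd_mem[OF yd, of i "x+1"] unfolding Bset_def by simp
    have xle: "x \<le> ?L i"
    proof -
      obtain i' j' where c: "(i', j') \<in> F" "x = j' - 1 \<or> x = j'" "i = i' - 1 \<or> i = i'"
        using in1 unfolding Bset_def lattice_points_def by auto
      have "(i, x) \<in> F" using yd_down[OF yd c(1)] c(2,3) i1 Lpos xge by auto
      then show ?thesis using yd_mem[OF yd] by simp
    qed
    have x: "x = ?L i" using xge xle by simp
    define g where "g j = int (psize (P (j, i))) - int (psize (P (j, i - 1)))" for j
    have c1: "(i, 1) \<in> F" using yd_col1[OF yd] i1 by simp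
    have g0: "g 0 = 0"
    proof -
      have "P (0, i) = pempty" "P (0, i - 1) = pempty"
        using gd_axis[OF g] lp_corner[OF c1] by auto
      then show ?thesis unfolding g_def by (simp add: psize_empty)
    qed
    have "int (row_sum F f i) = (\<Sum>j\<in>{1..?L i}. int (f (i, j)))"
      unfolding row_sum_def yd_row[OF yd i1(1)] by simp
    also have "\<dots> = (\<Sum>j\<in>{1..?L i}. g j - g (j - 1))"
    proof (rule sum.cong)
      fix j assume "j \<in> {1..?L i}"
      then have "(i, j) \<in> F" using yd_mem[OF yd] i1 by simp
      then show "int (f (i, j)) = g j - g (j - 1)" using cell unfolding g_def by simp
    qed simp
    also have "\<dots> = g (?L i)" using telescope g0 by simp
    also have "\<dots> = wt_plus ?w T i"
    proof -
      have "a - 1 \<le> length ?w" "a \<le> length ?w" using ap by auto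
      then show ?thesis
        unfolding g_def wt_plus_def a_def[symmetric] using PT[of a] PT[of "a - 1"] b1 b0 x by simp
    qed
    finally show ?thesis .
  qed
  have cols: "int (col_sum F f j) = wt_minus ?w T j" if j: "j \<in> {1..num_cols F}" for j
  proof -
    define b where "b = minus_index ?w j"
    have ncol: "num_cols F = ?L 1" unfolding num_cols_def row_len_def by simp
    have bp: "b \<in> {1..length ?w} \<and> \<not> ?w!(b-1) \<and> count_list (drop (b - 1) ?w) False = j"
      using minus_index_props[of j ?w] j bw ncol unfolding b_def by simp
    have bs: "bpoint ?w b = (fst (bpoint ?w (b - 1)) - 1, snd (bpoint ?w (b - 1)))"
    proof -
      have lt: "b - 1 < length ?w" using bp by auto
      have "Suc (b - 1) = b" using bp by auto
      then show ?thesis using bpoint_Suc[OF lt] bp by simp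
    qed
    define y where "y = snd (bpoint ?w (b - 1))"
    have fb: "fst (bpoint ?w (b - 1)) = j" using bp unfolding bpoint_def by simp
    have b0: "bpoint ?w (b - 1) = (j, y)" using fb y_def by (simp add: prod_eq_iff)
    have b1: "bpoint ?w b = (j - 1, y)" using bs fb y_def by simp
    have in1: "(j - 1, y) \<in> Bset F" using bw bp b1 by (metis atLeastAtMost_iff)
    have in0: "(j, y) \<in> Bset F" using bw bp b0 by (metis atLeastAtMost_iff diff_le_self le_trans)
    have j1: "1 \<le> j" using j by simp
    have notin: "(y + 1, j) \<notin> F" using in1 j1 unfolding Bset_def by simp
    obtain i' j' where c: "(i', j') \<in> F" "j = j' - 1 \<or> j = j'" "y = i' - 1 \<or> y = i'"
      using in0 unfolding Bset_def lattice_points_def by auto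
    have y1: "1 \<le> y"
    proof (rule ccontr)
      assume "\<not> 1 \<le> y"
      then have "y = 0" by simp
      have "(1, j) \<in> F" using yd_down[OF yd c(1)] c(2) j1 yd_pos[OF yd c(1)] by auto
      then show False using notin \<open>y = 0\<close> by simp
    qed
    have yin: "(y, j) \<in> F" using yd_down[OF yd c(1)] c(2,3) j1 y1 by auto
    have colset: "{i. (i, j) \<in> F} = {1..y}"
    proof
      show "{i. (i, j) \<in> F} \<subseteq> {1..y}"
      proof
        fix i assume "i \<in> {i. (i, j) \<in> F}"
        then have iF: "(i, j) \<in> F" by simp
        have "i \<le> y"
        proof (rule ccontr)
          assume "\<not> i \<le> y"
          then have "(y + 1, j) \<in> F" using yd_down[OF yd iF] j1 by simp
          then show False using notin by simp
        qed
        then show "i \<in> {1..y}" using yd_pos[OF yd iF] by simp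
      qed
      show "{1..y} \<subseteq> {i. (i, j) \<in> F}" using yd_down[OF yd yin] j1 by auto
    qed
    define h where "h i = int (psize (P (j, i))) - int (psize (P (j - 1, i)))" for i
    have c1: "(1, j) \<in> F" using yd_down[OF yd yin] y1 j1 by simp
    have h0: "h 0 = 0"
    proof -
      have "P (j, 0) = pempty" "P (j - 1, 0) = pempty"
        using gd_axis[OF g] lp_corner[OF c1] by auto
      then show ?thesis unfolding h_def by (simp add: psize_empty)
    qed
    have "int (col_sum F f j) = (\<Sum>i\<in>{1..y}. int (f (i, j)))"
      unfolding col_sum_def colset by simp
    also have "\<dots> = (\<Sum>i\<in>{1..y}. h i - h (i - 1))"
    proof (rule sum.cong)
      fix i assume "i \<in> {1..y}"
      then have "(i, j) \<in> F" using colset by blast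
      then show "int (f (i, j)) = h i - h (i - 1)" using cell unfolding h_def by simp
    qed simp
    also have "\<dots> = h y" using telescope h0 by simp
    also have "\<dots> = wt_minus ?w T j"
    proof -
      have "b - 1 \<le> length ?w" "b \<le> length ?w" using bp by auto
      then show ?thesis
        unfolding h_def wt_minus_def b_def[symmetric] using PT[of b] PT[of "b - 1"] b1 b0 by simp
    qed
    finally show ?thesis .
  qed
  show ?thesis using rows cols by blast
qed

lemma gd_reflect:
  assumes g: "growth_diagram R F f P"
    and sym: "\<And>m ka mu nu rho. R m ka mu nu rho \<Longrightarrow> R m ka nu mu rho"
  shows "growth_diagram R (reflect F) (\<lambda>(i, j). f (j, i)) (\<lambda>(x, y). P (y, x))"
  unfolding growth_diagram_def
proof (intro conjI ballI impI)
  fix p assume "p \<in> lattice_points (reflect F)"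
  then have "prod.swap p \<in> lattice_points F" unfolding reflect_lp by auto
  then show "is_partition (case p of (x, y) \<Rightarrow> P (y, x))" using g unfolding growth_diagram_def
    by (cases p) auto
next
  fix p assume p: "p \<in> lattice_points (reflect F)"
  obtain x y where xy: "p = (x, y)" by fastforce
  have "(y, x) \<in> lattice_points F" using p xy unfolding reflect_lp by auto
  then show "case p of (x, y) \<Rightarrow> x = 0 \<or> y = 0 \<longrightarrow> (case (x, y) of (x, y) \<Rightarrow> P (y, x)) = pempty"
    using gd_axis[OF g] xy by auto
next
  fix c assume c: "c \<in> reflect F"
  obtain i j where ij: "c = (i, j)" by fastforce
  have "(j, i) \<in> F" using c ij reflect_mem by blast
  from sym[OF gd_cell[OF g this]]
  show "case c of (i, j) \<Rightarrow> R ((\<lambda>(i, j). f (j, i)) (i, j)) ((\<lambda>(x, y). P (y, x)) (j - 1, i - 1))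
     ((\<lambda>(x, y). P (y, x)) (j - 1, i)) ((\<lambda>(x, y). P (y, x)) (j, i - 1)) ((\<lambda>(x, y). P (y, x)) (j, i))"
    using ij by simp
qed

lemma part2:
  assumes yd: "young_diagram F" and ne: "F \<noteq> {}" and g: "growth_diagram R F f P"
    and bd: "boundary_is F P T" and lenT: "length T = length (boundary_word F) + 1"
    and g': "growth_diagram R (reflect F) f' P'" and bd': "boundary_is (reflect F) P' (rev T)"
    and sym: "\<And>m ka mu nu rho. R m ka mu nu rho \<Longrightarrow> R m ka nu mu rho"
    and det: "\<And>m ka mu nu rho m' ka'. R m ka mu nu rho \<Longrightarrow> R m' ka' mu nu rho \<Longrightarrow> m = m' \<and> ka = ka'"
  shows "\<forall>(i, j)\<in>F. f' (j, i) = f (i, j)"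
proof -
  let ?w = "boundary_word F" and ?w' = "boundary_word (reflect F)"
  have yd': "young_diagram (reflect F)" using reflect_yd[OF yd] .
  have ne': "reflect F \<noteq> {}" using ne unfolding reflect_def by simp
  have fin': "finite (reflect F)" using yd' unfolding young_diagram_def by simp
  have g2: "growth_diagram R (reflect F) (\<lambda>(i, j). f (j, i)) (\<lambda>(x, y). P (y, x))"
    using gd_reflect[OF g sym] .
  have agree: "P' p = (\<lambda>(x, y). P (y, x)) p" if p: "p \<in> Bset (reflect F)" for p
  proof -
    obtain x y where xy: "p = (x, y)" by fastforce
    define k where "k = y + row_len (reflect F) 1 - x"
    have kk: "k \<le> length ?w' \<and> bpoint ?w' k = (x, y)"
      using bset_index[OF yd' ne', of x y] p xy k_def by simp
    have rb: "length ?w' = length ?w \<and> prod.swap (bpoint ?w' k) = bpoint ?w (length ?w - k)"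
      using reflect_bpoint[OF yd ne] kk by blast
    have "P' p = rev T ! k" using bd' kk xy unfolding boundary_is_def by auto
    also have "\<dots> = T ! (length ?w - k)" using kk rb lenT by (simp add: rev_nth)
    also have "\<dots> = P (bpoint ?w (length ?w - k))" using bd unfolding boundary_is_def by simp
    also have "\<dots> = P (y, x)" using rb kk by simp
    finally show ?thesis using xy by simp
  qed
  have "\<forall>c\<in>reflect F. f' c = (\<lambda>(i, j). f (j, i)) c"
    by (rule gd_unique(2)[OF fin' g' g2]) (erule (1) det, erule agree)
  then show ?thesis using reflect_mem by fastforce
qed

theorem proposition3p4:
  fixes F :: "(nat \<times> nat) set"
  assumes "young_diagram F" and "F \<noteq> {}"
  shows
  "(\<forall>d>0. \<forall>T. d_semistandard_osc d (boundary_word F) T \<longrightarrow>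
     (\<forall>f P. growth_diagram (drsk_rule d) F f P \<and> boundary_is F P T \<longrightarrow>
        (\<forall>i\<in>{1..num_rows F}. int (row_sum F f i) = wt_plus (boundary_word F) T i) \<and>
        (\<forall>j\<in>{1..num_cols F}. int (col_sum F f j) = wt_minus (boundary_word F) T j)) \<and>
     (\<forall>f P f' P'. growth_diagram (drsk_rule d) F f P \<and> boundary_is F P T \<and>
        growth_diagram (drsk_rule d) (reflect F) f' P' \<and> boundary_is (reflect F) P' (rev T) \<longrightarrow>
        (\<forall>(i, j)\<in>F. f' (j, i) = f (i, j))))
   \<and>
   (\<forall>T. semistandard_osc (boundary_word F) T \<longrightarrow>
     (\<forall>f P. growth_diagram rsk_rule F f P \<and> boundary_is F P T \<longrightarrow>
        (\<forall>i\<in>{1..num_rows F}. int (row_sum F f i) = wt_plus (boundary_word F) T i) \<and>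
        (\<forall>j\<in>{1..num_cols F}. int (col_sum F f j) = wt_minus (boundary_word F) T j)) \<and>
     (\<forall>f P f' P'. growth_diagram rsk_rule F f P \<and> boundary_is F P T \<and>
        growth_diagram rsk_rule (reflect F) f' P' \<and> boundary_is (reflect F) P' (rev T) \<longrightarrow>
        (\<forall>(i, j)\<in>F. f' (j, i) = f (i, j))))"
proof -
  have D: "(\<forall>f P. growth_diagram (drsk_rule d) F f P \<and> boundary_is F P T \<longrightarrow>
        (\<forall>i\<in>{1..num_rows F}. int (row_sum F f i) = wt_plus (boundary_word F) T i) \<and>
        (\<forall>j\<in>{1..num_cols F}. int (col_sum F f j) = wt_minus (boundary_word F) T j)) \<and>
     (\<forall>f P f' P'. growth_diagram (drsk_rule d) F f P \<and> boundary_is F P T \<and>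
        growth_diagram (drsk_rule d) (reflect F) f' P' \<and> boundary_is (reflect F) P' (rev T) \<longrightarrow>
        (\<forall>(i, j)\<in>F. f' (j, i) = f (i, j)))"
    if d: "0 < d" and T: "d_semistandard_osc d (boundary_word F) T" for d T
  proof (intro conjI allI impI)
    have lenT: "length T = length (boundary_word F) + 1" using T unfolding d_semistandard_osc_def osc_tableau_def by simp
    fix f P assume h: "growth_diagram (drsk_rule d) F f P \<and> boundary_is F P T"
    have "(\<forall>i\<in>{1..num_rows F}. int (row_sum F f i) = wt_plus (boundary_word F) T i) \<and>
        (\<forall>j\<in>{1..num_cols F}. int (col_sum F f j) = wt_minus (boundary_word F) T j)"
      by (rule part1[OF assms(1,2)]) (use h in blast, use h in blast, erule drsk_size[OF _ d])
    then show "\<forall>i\<in>{1..num_rows F}. int (row_sum F f i) = wt_plus (boundary_word F) T i"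
      "\<forall>j\<in>{1..num_cols F}. int (col_sum F f j) = wt_minus (boundary_word F) T j" by blast+
  next
    have lenT: "length T = length (boundary_word F) + 1" using T unfolding d_semistandard_osc_def osc_tableau_def by simp
    fix f P f' P'
    assume h: "growth_diagram (drsk_rule d) F f P \<and> boundary_is F P T \<and>
        growth_diagram (drsk_rule d) (reflect F) f' P' \<and> boundary_is (reflect F) P' (rev T)"
    show "\<forall>(i, j)\<in>F. f' (j, i) = f (i, j)"
      by (rule part2[OF assms(1,2) _ _ lenT, of "drsk_rule d" f P f' P'])
         (use h in blast, use h in blast, use h in blast, use h in blast, erule drsk_sym, erule (1) drsk_det[OF _ _ d])
  qed
  have S: "(\<forall>f P. growth_diagram rsk_rule F f P \<and> boundary_is F P T \<longrightarrow>
        (\<forall>i\<in>{1..num_rows F}. int (row_sum F f i) = wt_plus (boundary_word F) T i) \<and>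
        (\<forall>j\<in>{1..num_cols F}. int (col_sum F f j) = wt_minus (boundary_word F) T j)) \<and>
     (\<forall>f P f' P'. growth_diagram rsk_rule F f P \<and> boundary_is F P T \<and>
        growth_diagram rsk_rule (reflect F) f' P' \<and> boundary_is (reflect F) P' (rev T) \<longrightarrow>
        (\<forall>(i, j)\<in>F. f' (j, i) = f (i, j)))"
    if T: "semistandard_osc (boundary_word F) T" for T
  proof (intro conjI allI impI)
    fix f P assume h: "growth_diagram rsk_rule F f P \<and> boundary_is F P T"
    have "(\<forall>i\<in>{1..num_rows F}. int (row_sum F f i) = wt_plus (boundary_word F) T i) \<and>
        (\<forall>j\<in>{1..num_cols F}. int (col_sum F f j) = wt_minus (boundary_word F) T j)"
      by (rule part1[OF assms(1,2)]) (use h in blast, use h in blast, erule rsk_size)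
    then show "\<forall>i\<in>{1..num_rows F}. int (row_sum F f i) = wt_plus (boundary_word F) T i"
      "\<forall>j\<in>{1..num_cols F}. int (col_sum F f j) = wt_minus (boundary_word F) T j" by blast+
  next
    have lenT: "length T = length (boundary_word F) + 1" using T unfolding semistandard_osc_def osc_tableau_def by simp
    fix f P f' P'
    assume h: "growth_diagram rsk_rule F f P \<and> boundary_is F P T \<and>
        growth_diagram rsk_rule (reflect F) f' P' \<and> boundary_is (reflect F) P' (rev T)"
    show "\<forall>(i, j)\<in>F. f' (j, i) = f (i, j)"
      by (rule part2[OF assms(1,2) _ _ lenT, of rsk_rule f P f' P'])
         (use h in blast, use h in blast, use h in blast, use h in blast, erule rsk_sym, erule (1) rsk_det)
  qed
  show ?thesis
    apply (rule conjI)
     apply (intro allI impI)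
     apply (rule D; assumption)
    apply (intro allI impI)
    apply (rule S; assumption)
    done
qed


end
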